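(* Let $G$ be a 3-connected cubic graph and $S$ a finite subset of $V(G)$. Then there is a finite subset $T$ of $V(G)$ such that $S\cup N_G(S)\subseteq T$ and for every component $H$ of $G-T$, the set $N_G(H)$ is 3-connected in $G-S$.
   Context: For $X\subseteq V(G)$, $N_G(X)=\bigcup_{v\in X}N_G(v)\setminus X$; for a subgraph $H$, $N_G(H)=N_G(V(H))$. A vertex set $X$ is 3-connected in a graph $G'$ if every two vertices of $X$ are joined by 3 internally disjoint paths of $G'$. *)

theory Defs
  imports Main
begin

definition graph :: "'a set \<Rightarrow> ('a \<Rightarrow> 'a \<Rightarrow> bool) \<Rightarrow> bool" where
  "graph V E \<longleftrightarrow> (\<forall>x y. E x y \<longrightarrow> x \<in> V \<and> y \<in> V \<and> x \<noteq> y \<and> E y x)"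

definition nbrs :: "('a \<Rightarrow> 'a \<Rightarrow> bool) \<Rightarrow> 'a \<Rightarrow> 'a set" where
  "nbrs E v = {u. E v u}"

definition cubic :: "'a set \<Rightarrow> ('a \<Rightarrow> 'a \<Rightarrow> bool) \<Rightarrow> bool" where
  "cubic V E \<longleftrightarrow> (\<forall>v\<in>V. finite (nbrs E v) \<and> card (nbrs E v) = 3)"

definition nbhd :: "('a \<Rightarrow> 'a \<Rightarrow> bool) \<Rightarrow> 'a set \<Rightarrow> 'a set" where
  "nbhd E X = (\<Union>v\<in>X. nbrs E v) - X"

definition is_path :: "'a set \<Rightarrow> ('a \<Rightarrow> 'a \<Rightarrow> bool) \<Rightarrow> 'a list \<Rightarrow> 'a \<Rightarrow> 'a \<Rightarrow> bool" where
  "is_path W E p x y \<longleftrightarrow> p \<noteq> [] \<and> hd p = x \<and> last p = y \<and> distinct p \<and> set p \<subseteq> W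
     \<and> (\<forall>i. Suc i < length p \<longrightarrow> E (p ! i) (p ! Suc i))"

definition interior :: "'a list \<Rightarrow> 'a set" where
  "interior p = set (butlast (tl p))"

definition connected_in :: "'a set \<Rightarrow> ('a \<Rightarrow> 'a \<Rightarrow> bool) \<Rightarrow> bool" where
  "connected_in W E \<longleftrightarrow> (\<forall>x\<in>W. \<forall>y\<in>W. \<exists>p. is_path W E p x y)"

definition three_connected :: "'a set \<Rightarrow> ('a \<Rightarrow> 'a \<Rightarrow> bool) \<Rightarrow> bool" where
  "three_connected V E \<longleftrightarrow> (infinite V \<or> card V > 3) \<and>
     (\<forall>X. X \<subseteq> V \<and> finite X \<and> card X < 3 \<longrightarrow> connected_in (V - X) E)"

definition component_of :: "'a set \<Rightarrow> ('a \<Rightarrow> 'a \<Rightarrow> bool) \<Rightarrow> 'a set \<Rightarrow> bool" where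
  "component_of W E C \<longleftrightarrow> (\<exists>x\<in>W. C = {y. \<exists>p. is_path W E p x y})"

definition set_three_connected_in :: "'a set \<Rightarrow> 'a set \<Rightarrow> ('a \<Rightarrow> 'a \<Rightarrow> bool) \<Rightarrow> bool" where
  "set_three_connected_in X W E \<longleftrightarrow> (\<forall>x\<in>X. \<forall>y\<in>X. x \<noteq> y \<longrightarrow>
     (\<exists>p1 p2 p3. is_path W E p1 x y \<and> is_path W E p2 x y \<and> is_path W E p3 x y
        \<and> p1 \<noteq> p2 \<and> p1 \<noteq> p3 \<and> p2 \<noteq> p3
        \<and> interior p1 \<inter> interior p2 = {} \<and> interior p1 \<inter> interior p3 = {}
        \<and> interior p2 \<inter> interior p3 = {}))"

end

theory Submission
  imports Defs
begin


definition pth :: "'a set \<Rightarrow> ('a \<Rightarrow> 'a \<Rightarrow> bool) \<Rightarrow> 'a list \<Rightarrow> bool" where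
  "pth W E p \<longleftrightarrow> p \<noteq> [] \<and> distinct p \<and> set p \<subseteq> W \<and> successively E p"

lemma is_path_pth: "is_path W E p a b \<longleftrightarrow> pth W E p \<and> hd p = a \<and> last p = b"
  by (auto simp: is_path_def pth_def successively_conv_nth)

definition conn :: "'a set \<Rightarrow> ('a \<Rightarrow> 'a \<Rightarrow> bool) \<Rightarrow> 'a \<Rightarrow> 'a \<Rightarrow> bool" where
  "conn W E a b \<longleftrightarrow> (\<exists>p. is_path W E p a b)"

lemma walk_to_path:
  "p \<noteq> [] \<Longrightarrow> successively E p \<Longrightarrow> \<exists>q. q \<noteq> [] \<and> distinct q \<and> set q \<subseteq> set p \<and>
      successively E q \<and> hd q = hd p \<and> last q = last p"
proof (induction "length p" arbitrary: p rule: less_induct)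
  case less
  show ?case
  proof (cases "distinct p")
    case True thus ?thesis using less by blast
  next
    case False
    then obtain xs c ys zs where p: "p = xs @ [c] @ ys @ [c] @ zs" using not_distinct_decomp by blast
    let ?p' = "xs @ [c] @ zs"
    have "length ?p' < length p" using p by simp
    moreover have "successively E ?p'" using less.prems(2) unfolding p
      by (auto simp: successively_append_iff successively_Cons split: if_splits)
    ultimately obtain q where q: "q \<noteq> [] \<and> distinct q \<and> set q \<subseteq> set ?p' \<and>
      successively E q \<and> hd q = hd ?p' \<and> last q = last ?p'" using less(1)[of ?p'] by auto
    have "hd ?p' = hd p" "last ?p' = last p" "set ?p' \<subseteq> set p" using p
      by (auto simp: hd_append last_append)
    thus ?thesis using q by auto
  qed
qed

lemma pth_appendD1: "pth W E (xs @ ys) \<Longrightarrow> xs \<noteq> [] \<Longrightarrow> pth W E xs"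
  by (auto simp: pth_def successively_append_iff)
lemma pth_appendD2: "pth W E (xs @ ys) \<Longrightarrow> ys \<noteq> [] \<Longrightarrow> pth W E ys"
  by (auto simp: pth_def successively_append_iff)
lemma pth_append: "pth W E xs \<Longrightarrow> pth W E ys \<Longrightarrow> set xs \<inter> set ys = {} \<Longrightarrow> E (last xs) (hd ys)
   \<Longrightarrow> pth W E (xs @ ys)"
  by (auto simp: pth_def successively_append_iff)
lemma pth_rev: "(\<And>u v. E u v \<Longrightarrow> E v u) \<Longrightarrow> pth W E p \<Longrightarrow> pth W E (rev p)"
  by (auto simp: pth_def elim: successively_mono)
lemma pth_mono: "pth W E p \<Longrightarrow> set p \<subseteq> W' \<Longrightarrow> (\<And>u v. u \<in> set p \<Longrightarrow> v \<in> set p \<Longrightarrow> E u v \<Longrightarrow> E' u v)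
   \<Longrightarrow> pth W' E' p"
  by (auto simp: pth_def elim: successively_mono)
lemma pth_single: "a \<in> W \<Longrightarrow> pth W E [a]"
  by (auto simp: pth_def)
lemma pth_Cons: "pth W E (a # p) \<longleftrightarrow> a \<in> W \<and> a \<notin> set p \<and> (p = [] \<or> (E a (hd p) \<and> pth W E p))"
  by (auto simp: pth_def successively_Cons)

lemma pth_prefix_to:
  assumes "pth W E p" "w \<in> set p"
  shows "\<exists>q. pth W E q \<and> hd q = hd p \<and> last q = w \<and> set q \<subseteq> set p"
proof -
  obtain xs ys where p: "p = xs @ w # ys" using assms(2) by (meson split_list)
  have "pth W E (xs @ [w])" using assms(1) pth_appendD1[of W E "xs @ [w]" ys] p by simp
  thus ?thesis using p by (auto simp: hd_append)
qed

lemma pth_suffix_from: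
  assumes "pth W E p" "w \<in> set p"
  shows "\<exists>q. pth W E q \<and> hd q = w \<and> last q = last p \<and> set q \<subseteq> set p"
proof -
  obtain xs ys where p: "p = xs @ w # ys" using assms(2) by (meson split_list)
  have "pth W E (w # ys)" using assms(1) pth_appendD2[of W E xs "w # ys"] p by simp
  thus ?thesis using p by (auto simp: last_append)
qed

lemma conn_trans: assumes "conn W E a b" "conn W E b c" shows "conn W E a c"
proof -
  obtain p q where p: "is_path W E p a b" and q: "is_path W E q b c" using assms by (auto simp: conn_def)
  let ?w = "p @ tl q"
  have "successively E ?w" using p q
    by (cases q) (auto simp: is_path_pth pth_def successively_append_iff successively_Cons)
  moreover have "?w \<noteq> []" using p by (auto simp: is_path_pth pth_def)
  ultimately obtain r where r: "r \<noteq> [] \<and> distinct r \<and> set r \<subseteq> set ?w \<and>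
      successively E r \<and> hd r = hd ?w \<and> last r = last ?w" using walk_to_path by blast
  have "set ?w \<subseteq> W" "hd ?w = a" "last ?w = c" using p q
    by (cases q; auto simp: is_path_pth pth_def dest: list.set_sel(2))+
  thus ?thesis using r unfolding conn_def is_path_pth pth_def by (intro exI[of _ r]) auto
qed

lemma conn_sym: "(\<And>u v. E u v \<Longrightarrow> E v u) \<Longrightarrow> conn W E a b \<Longrightarrow> conn W E b a"
  unfolding conn_def is_path_pth by (metis pth_rev hd_rev last_rev pth_def)

lemma conn_mono: "conn W E a b \<Longrightarrow> W \<subseteq> W' \<Longrightarrow> (\<And>u v. E u v \<Longrightarrow> E' u v) \<Longrightarrow> conn W' E' a b"
proof -
  assume a: "conn W E a b" "W \<subseteq> W'" "\<And>u v. E u v \<Longrightarrow> E' u v"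
  then obtain p where "pth W E p" "hd p = a" "last p = b" unfolding conn_def is_path_pth by blast
  moreover have "pth W' E' p" using pth_mono[OF \<open>pth W E p\<close>, of W' E'] a \<open>pth W E p\<close>
    unfolding pth_def by blast
  ultimately show ?thesis unfolding conn_def is_path_pth by blast
qed

lemma conn_refl: "a \<in> W \<Longrightarrow> conn W E a a"
  unfolding conn_def is_path_pth using pth_single by fastforce

lemma conn_edge: "a \<in> W \<Longrightarrow> b \<in> W \<Longrightarrow> E a b \<Longrightarrow> conn W E a b"
proof (cases "a = b")
  case True
  assume "a \<in> W" thus ?thesis using True conn_refl by metis
next
  case False
  assume "a \<in> W" "b \<in> W" "E a b"
  hence "is_path W E [a,b] a b" using False by (auto simp: is_path_pth pth_def)
  thus ?thesis unfolding conn_def by blast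
qed

lemma conn_pth: "pth W E p \<Longrightarrow> conn W E (hd p) (last p)"
  unfolding conn_def is_path_pth by blast

lemma conn_in: "conn W E a b \<Longrightarrow> a \<in> W \<and> b \<in> W"
  unfolding conn_def is_path_pth pth_def by auto



lemma finite_witness:
  fixes P :: "'c \<Rightarrow> bool" and supp :: "'c \<Rightarrow> 'b set"
  assumes "\<And>p. P p \<Longrightarrow> finite (supp p)"
  shows "\<exists>F. finite F \<and> (\<forall>Ob. finite Ob \<and> card Ob \<le> n \<longrightarrow> (\<exists>p. P p \<and> supp p \<inter> Ob = {})
            \<longrightarrow> (\<exists>p. P p \<and> supp p \<subseteq> F \<and> supp p \<inter> Ob = {}))"
  using assms
proof (induction n arbitrary: P)
  case 0
  show ?case
  proof (cases "\<exists>p. P p")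
    case True then obtain p0 where "P p0" by blast
    show ?thesis apply (rule exI[of _ "supp p0"]) using 0 \<open>P p0\<close> by auto
  next
    case False thus ?thesis by auto
  qed
next
  case (Suc n)
  show ?case
  proof (cases "\<exists>p. P p")
    case False thus ?thesis by auto
  next
    case True then obtain p0 where p0: "P p0" by blast
    have "\<forall>b. \<exists>F. finite F \<and> (\<forall>Ob. finite Ob \<and> card Ob \<le> n \<longrightarrow>
        (\<exists>p. (P p \<and> b \<notin> supp p) \<and> supp p \<inter> Ob = {}) \<longrightarrow>
        (\<exists>p. (P p \<and> b \<notin> supp p) \<and> supp p \<subseteq> F \<and> supp p \<inter> Ob = {}))"
    proof
      fix b show "\<exists>F. finite F \<and> (\<forall>Ob. finite Ob \<and> card Ob \<le> n \<longrightarrow>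
        (\<exists>p. (P p \<and> b \<notin> supp p) \<and> supp p \<inter> Ob = {}) \<longrightarrow>
        (\<exists>p. (P p \<and> b \<notin> supp p) \<and> supp p \<subseteq> F \<and> supp p \<inter> Ob = {}))"
        using Suc.IH[of "\<lambda>p. P p \<and> b \<notin> supp p"] Suc.prems by auto
    qed
    then obtain Fb where Fb: "\<And>b. finite (Fb b) \<and> (\<forall>Ob. finite Ob \<and> card Ob \<le> n \<longrightarrow>
        (\<exists>p. (P p \<and> b \<notin> supp p) \<and> supp p \<inter> Ob = {}) \<longrightarrow>
        (\<exists>p. (P p \<and> b \<notin> supp p) \<and> supp p \<subseteq> Fb b \<and> supp p \<inter> Ob = {}))" by metis
    let ?F = "supp p0 \<union> (\<Union>b\<in>supp p0. Fb b)"
    show ?thesis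
    proof (intro exI[of _ ?F] conjI allI impI)
      show "finite ?F" using Fb Suc.prems(1)[OF p0] by simp
      fix Ob assume Ob: "finite Ob \<and> card Ob \<le> Suc n" and ex: "\<exists>p. P p \<and> supp p \<inter> Ob = {}"
      show "\<exists>p. P p \<and> supp p \<subseteq> ?F \<and> supp p \<inter> Ob = {}"
      proof (cases "supp p0 \<inter> Ob = {}")
        case True then show ?thesis using p0 by blast
      next
        case False then obtain b where b: "b \<in> supp p0" "b \<in> Ob" by blast
        have Ob': "finite (Ob - {b}) \<and> card (Ob - {b}) \<le> n" using Ob b by auto
        from ex obtain p where "P p" "supp p \<inter> Ob = {}" by blast
        hence "(P p \<and> b \<notin> supp p) \<and> supp p \<inter> (Ob - {b}) = {}" using b by auto
        moreover have "finite (Ob - {b}) \<and> card (Ob - {b}) \<le> n \<longrightarrow>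
        (\<exists>p. (P p \<and> b \<notin> supp p) \<and> supp p \<inter> (Ob - {b}) = {}) \<longrightarrow>
        (\<exists>p. (P p \<and> b \<notin> supp p) \<and> supp p \<subseteq> Fb b \<and> supp p \<inter> (Ob - {b}) = {})"
          using Fb[of b] by (rule conjE) (erule allE)
        ultimately obtain q where "(P q \<and> b \<notin> supp q) \<and> supp q \<subseteq> Fb b \<and> supp q \<inter> (Ob - {b}) = {}"
          using Ob' by blast
        thus ?thesis using b by blast
      qed
    qed
  qed
qed



definition apath :: "'a set \<Rightarrow> ('a \<Rightarrow> 'a \<Rightarrow> bool) \<Rightarrow> 'a set \<Rightarrow> 'a set \<Rightarrow> 'a list \<Rightarrow> bool" where
  "apath W E A B p \<longleftrightarrow> pth W E p \<and> hd p \<in> A \<and> last p \<in> B"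

definition sep :: "'a set \<Rightarrow> ('a \<Rightarrow> 'a \<Rightarrow> bool) \<Rightarrow> 'a set \<Rightarrow> 'a set \<Rightarrow> 'a set \<Rightarrow> bool" where
  "sep W E A B R \<longleftrightarrow> (\<forall>p. apath W E A B p \<longrightarrow> set p \<inter> R \<noteq> {})"

definition dfam :: "'a list set \<Rightarrow> bool" where
  "dfam P \<longleftrightarrow> (\<forall>p\<in>P. \<forall>q\<in>P. p \<noteq> q \<longrightarrow> set p \<inter> set q = {})"

definition rem :: "('a \<Rightarrow> 'a \<Rightarrow> bool) \<Rightarrow> 'a \<Rightarrow> 'a \<Rightarrow> 'a \<Rightarrow> 'a \<Rightarrow> bool" where
  "rem E x y = (\<lambda>u v. E u v \<and> {u, v} \<noteq> {x, y})"

lemma rem_commute: "rem E x y = rem E y x"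
  unfolding rem_def by (auto simp: insert_commute)

lemma pth_rem: assumes "pth W E p" "\<not> (x \<in> set p \<and> y \<in> set p)" shows "pth W (rem E x y) p"
proof (rule pth_mono[OF assms(1)])
  show "set p \<subseteq> W" using assms(1) by (simp add: pth_def)
  fix u v assume uv: "u \<in> set p" "v \<in> set p" "E u v"
  have "{u,v} \<noteq> {x,y}"
  proof
    assume "{u,v} = {x,y}"
    hence "x \<in> {u,v}" "y \<in> {u,v}" by auto
    thus False using uv assms(2) by blast
  qed
  thus "rem E x y u v" using uv by (simp add: rem_def)
qed

lemma pth_remD: assumes "pth W (rem E x y) p" shows "pth W E p"
proof (rule pth_mono[OF assms(1)])
  show "set p \<subseteq> W" using assms(1) by (simp add: pth_def)
qed (simp add: rem_def)

lemma apath_rev: "(\<And>u v. E u v \<Longrightarrow> E v u) \<Longrightarrow> apath W E A B p \<Longrightarrow> apath W E B A (rev p)"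
  by (auto simp: apath_def pth_rev hd_rev last_rev)

lemma sep_sym: "(\<And>u v. E u v \<Longrightarrow> E v u) \<Longrightarrow> sep W E A B R \<Longrightarrow> sep W E B A R"
  unfolding sep_def by (metis apath_rev set_rev)

lemma trim_path:
  assumes "pth W E p" "set p \<inter> X \<noteq> {}"
  shows "\<exists>q. pth W E q \<and> hd q = hd p \<and> last q \<in> X \<and> set (butlast q) \<inter> X = {} \<and> set q \<subseteq> set p"
proof -
  obtain ys c zs where p: "p = ys @ c # zs" "c \<in> X" "\<forall>y\<in>set ys. y \<notin> X"
    using split_list_first_prop[of p "\<lambda>v. v \<in> X"] assms(2) by blast
  have "pth W E (ys @ [c])" using assms(1) pth_appendD1[of W E "ys @ [c]" zs] p by simp
  thus ?thesis using p by (intro exI[of _ "ys @ [c]"]) (auto simp: hd_append)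
qed



lemma trim_family:
  assumes "finite PP" "card PP = card X" "finite X" "\<forall>p\<in>PP. apath W E A X p" "dfam PP"
  shows "\<exists>P. \<forall>s\<in>X. pth W E (P s) \<and> hd (P s) \<in> A \<and> last (P s) = s \<and> set (butlast (P s)) \<inter> X = {}
          \<and> (\<forall>t\<in>X. s \<noteq> t \<longrightarrow> set (P s) \<inter> set (P t) = {})"
proof -
  have "\<forall>p\<in>PP. \<exists>q. pth W E q \<and> hd q = hd p \<and> last q \<in> X \<and> set (butlast q) \<inter> X = {} \<and> set q \<subseteq> set p"
  proof
    fix p assume "p \<in> PP"
    hence "pth W E p" "last p \<in> X" using assms(4) by (auto simp: apath_def)
    hence "set p \<inter> X \<noteq> {}" unfolding pth_def using last_in_set by blast
    thus "\<exists>q. pth W E q \<and> hd q = hd p \<and> last q \<in> X \<and> set (butlast q) \<inter> X = {} \<and> set q \<subseteq> set p"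
      using trim_path \<open>pth W E p\<close> by blast
  qed
  from bchoice[OF this] obtain tr where tr0: "\<forall>p\<in>PP. pth W E (tr p) \<and> hd (tr p) = hd p \<and> last (tr p) \<in> X
     \<and> set (butlast (tr p)) \<inter> X = {} \<and> set (tr p) \<subseteq> set p" by blast
  hence tr: "\<And>p. p \<in> PP \<Longrightarrow> pth W E (tr p) \<and> hd (tr p) = hd p \<and> last (tr p) \<in> X
     \<and> set (butlast (tr p)) \<inter> X = {} \<and> set (tr p) \<subseteq> set p" by blast
  define f where "f p = last (tr p)" for p
  have lastin: "f p \<in> set p" if "p \<in> PP" for p
  proof -
    have "tr p \<noteq> []" using tr[OF that] unfolding pth_def by blast
    moreover have "set (tr p) \<subseteq> set p" using tr[OF that] by blast
    ultimately show ?thesis unfolding f_def using last_in_set by blast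
  qed
  have inj: "inj_on f PP"
  proof (rule inj_onI)
    fix p q assume pq: "p \<in> PP" "q \<in> PP" "f p = f q"
    have "f p \<in> set p" using lastin pq(1) by blast
    moreover have "f q \<in> set q" using lastin pq(2) by blast
    ultimately have "set p \<inter> set q \<noteq> {}" using pq(3) by auto
    thus "p = q" using assms(5) pq(1,2) unfolding dfam_def by blast
  qed
  have img: "f ` PP = X"
  proof (rule card_subset_eq)
    show "finite X" by fact
    show "f ` PP \<subseteq> X" using tr unfolding f_def by auto
    show "card (f ` PP) = card X" using card_image[OF inj] assms(2) by simp
  qed
  define P where "P s = tr (inv_into PP f s)" for s
  show ?thesis
  proof (intro exI[of _ P] ballI conjI allI impI)
    fix s assume s: "s \<in> X"
    have i: "inv_into PP f s \<in> PP" "f (inv_into PP f s) = s"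
      by (rule inv_into_into, simp add: img s, rule f_inv_into_f, simp add: img s)
    show "pth W E (P s)" "set (butlast (P s)) \<inter> X = {}" using tr[OF i(1)] unfolding P_def by auto
    show "hd (P s) \<in> A" using tr[OF i(1)] assms(4) i(1) unfolding P_def apath_def by auto
    show "last (P s) = s" using i(2) unfolding P_def f_def by simp
    fix t assume t: "t \<in> X" "s \<noteq> t"
    have j: "inv_into PP f t \<in> PP" "f (inv_into PP f t) = t"
      by (rule inv_into_into, simp add: img t, rule f_inv_into_f, simp add: img t)
    have "inv_into PP f s \<noteq> inv_into PP f t" using i(2) j(2) t(2) by auto
    hence "set (inv_into PP f s) \<inter> set (inv_into PP f t) = {}" using assms(5) i j unfolding dfam_def by blast
    thus "set (P s) \<inter> set (P t) = {}" using tr[OF i(1)] tr[OF j(1)] unfolding P_def by blast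
  qed
qed



definition edges :: "'a set \<Rightarrow> ('a \<Rightarrow> 'a \<Rightarrow> bool) \<Rightarrow> ('a \<times> 'a) set" where
  "edges W E = {(u,v). u \<in> W \<and> v \<in> W \<and> E u v}"

definition reachS :: "'a set \<Rightarrow> ('a \<Rightarrow> 'a \<Rightarrow> bool) \<Rightarrow> 'a set \<Rightarrow> 'a set \<Rightarrow> 'a set" where
  "reachS W E A S = {w. \<exists>p. apath (W - S) E A {w} p}"

lemma reachS_sub: "reachS W E A S \<subseteq> W - S"
proof
  fix w assume "w \<in> reachS W E A S"
  then obtain p where p: "apath (W - S) E A {w} p" unfolding reachS_def by blast
  hence "last p \<in> set p" "set p \<subseteq> W - S" "last p = w" unfolding apath_def pth_def by auto
  thus "w \<in> W - S" by blast
qed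

lemma reach_disjoint:
  assumes sym: "\<And>u v. E u v \<Longrightarrow> E v u" and sp: "sep W E A B S"
  shows "reachS W E A S \<inter> reachS W E B S = {}"
proof (rule ccontr)
  assume "reachS W E A S \<inter> reachS W E B S \<noteq> {}"
  then obtain w p1 p2 where p1: "apath (W - S) E A {w} p1" and p2: "apath (W - S) E B {w} p2"
    unfolding reachS_def by blast
  have "conn (W - S) E (hd p1) w" using p1 conn_pth unfolding apath_def by fastforce
  moreover have "conn (W - S) E w (hd p2)" using p2 conn_pth conn_sym[OF sym] unfolding apath_def by fastforce
  ultimately have "conn (W - S) E (hd p1) (hd p2)" by (rule conn_trans)
  then obtain q where q: "pth (W - S) E q" "hd q = hd p1" "last q = hd p2"
    unfolding conn_def is_path_pth by blast
  have "apath W E A B q" using q p1 p2 unfolding apath_def pth_def by auto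
  moreover have "set q \<inter> S = {}" using q unfolding pth_def by auto
  ultimately show False using sp unfolding sep_def by blast
qed

lemma butlast_reach:
  assumes "pth W E p" "hd p \<in> A" "set (butlast p) \<inter> S = {}"
  shows "set (butlast p) \<subseteq> reachS W E A S"
proof
  fix w assume w: "w \<in> set (butlast p)"
  hence ne: "butlast p \<noteq> []" by auto
  have pe: "p = butlast p @ [last p]" using assms(1) unfolding pth_def by simp
  have "pth W E (butlast p)" using pth_appendD1[of W E "butlast p" "[last p]"] assms(1) pe ne by simp
  hence "pth (W - S) E (butlast p)" using assms(3) unfolding pth_def by auto
  then obtain q where q: "pth (W - S) E q" "hd q = hd (butlast p)" "last q = w"
    using pth_prefix_to[OF _ w] by blast
  have "hd (butlast p) = hd p" using pe ne by (metis hd_append2)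
  thus "w \<in> reachS W E A S" using q assms(2) unfolding reachS_def apath_def by auto
qed

lemma rem_sym: "(\<And>u v. E u v \<Longrightarrow> E v u) \<Longrightarrow> rem E a b u v \<Longrightarrow> rem E a b v u"
  unfolding rem_def by (auto simp: insert_commute)

lemma claimA:
  assumes sym: "\<And>u v. E u v \<Longrightarrow> E v u" and irr: "\<And>u. \<not> E u u"
    and sepS: "sep W (rem E a b) A B S" and "a \<notin> S" "b \<notin> S" "E a b"
    and bR: "b \<in> reachS W (rem E a b) B S"
    and R: "sep W (rem E a b) A (insert a S) R"
  shows "sep W E A B R"
  unfolding sep_def
proof (intro allI impI)
  fix p assume p: "apath W E A B p"
  let ?E' = "rem E a b" and ?X = "insert a S"
  have "set p \<inter> ?X \<noteq> {}"
  proof (cases "set p \<inter> S = {}")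
    case True
    have "\<not> pth W ?E' p"
    proof
      assume "pth W ?E' p"
      hence "apath W ?E' A B p" using p unfolding apath_def by blast
      thus False using sepS True unfolding sep_def by blast
    qed
    hence "a \<in> set p" using pth_rem[of W E p a b] p unfolding apath_def by blast
    thus ?thesis by blast
  qed blast
  then obtain ys c zs where pd: "p = ys @ c # zs" "c \<in> ?X" "\<forall>y\<in>set ys. y \<notin> ?X"
    using split_list_first_prop[of p "\<lambda>v. v \<in> ?X"] by blast
  have pq: "pth W E (ys @ [c])" using pth_appendD1[of W E "ys @ [c]" zs] p pd unfolding apath_def by simp
  have hq: "hd (ys @ [c]) = hd p" using pd by (simp add: hd_append)
  have ab: "a \<noteq> b" using irr \<open>E a b\<close> by blast
  have "b \<notin> set (ys @ [c])"
  proof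
    assume "b \<in> set (ys @ [c])"
    moreover have "b \<noteq> c" using pd(2) ab \<open>b \<notin> S\<close> by auto
    ultimately have "b \<in> set ys" by simp
    then obtain us vs where ys: "ys = us @ b # vs" by (meson split_list)
    have "pth W E (us @ [b])" using pth_appendD1[of W E "us @ [b]" "vs @ [c]"] pq ys by simp
    moreover have "set (us @ [b]) \<subseteq> set ys" using ys by auto
    ultimately have "pth W ?E' (us @ [b])" using pth_rem[of W E "us @ [b]" a b] pd(3) by auto
    hence "pth (W - S) ?E' (us @ [b])" using \<open>set (us @ [b]) \<subseteq> set ys\<close> pd(3) unfolding pth_def by auto
    moreover have "hd (us @ [b]) = hd p" using pd ys by (cases us) auto
    ultimately have "b \<in> reachS W ?E' A S" using p unfolding reachS_def apath_def by auto
    moreover have "\<And>u v. ?E' u v \<Longrightarrow> ?E' v u" unfolding rem_def using sym by (auto simp: insert_commute)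
    ultimately show False using bR reach_disjoint[of ?E' W A B S] sepS by blast
  qed
  hence "pth W ?E' (ys @ [c])" using pth_rem[OF pq] by blast
  hence "apath W ?E' A ?X (ys @ [c])" using hq p pd(2) unfolding apath_def by auto
  hence "set (ys @ [c]) \<inter> R \<noteq> {}" using R unfolding sep_def by blast
  thus "set p \<inter> R \<noteq> {}" using pd(1) by auto
qed



lemma combine:
  fixes E' :: "'a \<Rightarrow> 'a \<Rightarrow> bool"
  assumes symE': "\<And>u v. E' u v \<Longrightarrow> E' v u" and sub: "\<And>u v. E' u v \<Longrightarrow> E u v"
    and Eab: "E a b" and "a \<notin> S" "b \<notin> S" "a \<noteq> b" "finite S"
    and disj: "reachS W E' A S \<inter> reachS W E' B S = {}"
    and aR: "a \<in> reachS W E' A S" and bR: "b \<in> reachS W E' B S"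
    and P: "\<forall>s\<in>insert a S. pth W E' (P s) \<and> hd (P s) \<in> A \<and> last (P s) = s \<and> set (butlast (P s)) \<inter> insert a S = {}
          \<and> (\<forall>t\<in>insert a S. s \<noteq> t \<longrightarrow> set (P s) \<inter> set (P t) = {})"
    and Q: "\<forall>s\<in>insert b S. pth W E' (Q s) \<and> hd (Q s) \<in> B \<and> last (Q s) = s \<and> set (butlast (Q s)) \<inter> insert b S = {}
          \<and> (\<forall>t\<in>insert b S. s \<noteq> t \<longrightarrow> set (Q s) \<inter> set (Q t) = {})"
  shows "\<exists>PP. finite PP \<and> card PP = Suc (card S) \<and> (\<forall>p\<in>PP. apath W E A B p) \<and> dfam PP"
proof -
  let ?RA = "reachS W E' A S" and ?RB = "reachS W E' B S"
  have Pp: "pth W E' (P s)" "hd (P s) \<in> A" "last (P s) = s" "P s \<noteq> []" if "s \<in> insert a S" for s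
    using P that unfolding pth_def by blast+
  have Qp: "pth W E' (Q s)" "hd (Q s) \<in> B" "last (Q s) = s" "Q s \<noteq> []" if "s \<in> insert b S" for s
    using Q that unfolding pth_def by blast+
  have RAS: "?RA \<inter> S = {}" "?RB \<inter> S = {}" using reachS_sub[of W E' A S] reachS_sub[of W E' B S] by blast+
  have PR: "set (butlast (P s)) \<subseteq> ?RA" if "s \<in> insert a S" for s
    using butlast_reach[of W E' "P s" A S] P that by blast
  have QR: "set (butlast (Q s)) \<subseteq> ?RB" if "s \<in> insert b S" for s
    using butlast_reach[of W E' "Q s" B S] Q that by blast
  have Pe: "P s = butlast (P s) @ [s]" if "s \<in> insert a S" for s
    using P that unfolding pth_def by (metis append_butlast_last_id)
  have Qe: "Q s = butlast (Q s) @ [s]" if "s \<in> insert b S" for s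
    using Q that unfolding pth_def by (metis append_butlast_last_id)
  have Pset: "set (P s) = insert s (set (butlast (P s)))" if "s \<in> insert a S" for s
    using Pe[OF that] by (metis Un_insert_right empty_set list.simps(15) set_append sup_bot.right_neutral)
  have Qset: "set (Q s) = insert s (set (butlast (Q s)))" if "s \<in> insert b S" for s
    using Qe[OF that] by (metis Un_insert_right empty_set list.simps(15) set_append sup_bot.right_neutral)
  have PaR: "set (P a) \<subseteq> ?RA" using Pset[of a] PR[of a] aR by auto
  have QbR: "set (Q b) \<subseteq> ?RB" using Qset[of b] QR[of b] bR by auto
  have PsR: "set (P s) \<subseteq> insert s ?RA" if "s \<in> S" for s using Pset[of s] PR[of s] that by auto
  have QsR: "set (butlast (Q s)) \<subseteq> ?RB \<inter> set (Q s)" if "s \<in> S" for s using Qset[of s] QR[of s] that by auto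
  have pthE: "pth W E p" if "pth W E' p" for p
  proof (rule pth_mono[OF that])
    show "set p \<subseteq> W" using that by (simp add: pth_def)
  qed (rule sub)
  define C where "C s = P s @ rev (butlast (Q s))" for s
  define D where "D = P a @ rev (Q b)"
  have Cset: "set (C s) = set (P s) \<union> set (butlast (Q s))" for s by (simp add: C_def)
  have Dset: "set D = set (P a) \<union> set (Q b)" by (simp add: D_def)
  have Capath: "apath W E A B (C s)" if s: "s \<in> S" for s
  proof (cases "butlast (Q s) = []")
    case True
    have "Q s = [s]" using Qe[of s] s True by simp
    hence "s \<in> B" using Q s by (metis insertI2 list.sel(1))
    thus ?thesis using Pp[of s] s True pthE unfolding C_def apath_def by auto
  next
    case False
    have qs: "pth W E' (butlast (Q s) @ [s])" using Qe[of s] Q s by simp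
    have q1: "pth W E' (butlast (Q s))" using pth_appendD1[OF qs False] .
    have "E' (last (butlast (Q s))) s" using qs False unfolding pth_def successively_append_iff by simp
    hence e: "E' (last (P s)) (hd (rev (butlast (Q s))))" using symE' Pp(3)[of s] s False by (simp add: hd_rev)
    have d: "set (P s) \<inter> set (rev (butlast (Q s))) = {}" using PsR[OF s] QsR[OF s] disj RAS s by (simp only: set_rev) blast
    have "pth W E' (C s)" unfolding C_def
      by (rule pth_append[OF Pp(1) pth_rev[OF symE' q1] d e]) (use s in blast)
    moreover have "hd (C s) = hd (P s)" using Pp(4)[of s] s unfolding C_def by simp
    moreover have "last (C s) = hd (Q s)"
    proof -
      have "last (C s) = hd (butlast (Q s))" using False unfolding C_def by (simp add: last_rev)
      moreover have "hd (butlast (Q s) @ [s]) = hd (butlast (Q s))" using hd_append2[OF False, of "[s]"] .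
      ultimately show ?thesis using Qe[of s] s by simp
    qed
    ultimately show ?thesis using Pp[of s] Qp[of s] s pthE unfolding apath_def by auto
  qed
  have Dapath: "apath W E A B D"
  proof -
    have pa: "pth W E (P a)" using Pp(1)[of a] pthE by blast
    have qb: "pth W E (rev (Q b))" using pthE[OF pth_rev[of E' W "Q b", OF symE' Qp(1)[of b]]] by blast
    have d: "set (P a) \<inter> set (rev (Q b)) = {}" using PaR QbR disj by auto
    have e: "E (last (P a)) (hd (rev (Q b)))" using Pp(3)[of a] Qp(3)[of b] Eab by (simp add: hd_rev)
    have "pth W E D" unfolding D_def by (rule pth_append[OF pa qb d e])
    moreover have "hd D = hd (P a)" using Pp(4)[of a] unfolding D_def by simp
    moreover have "last D = hd (Q b)" using Qp(4)[of b] unfolding D_def by (simp add: last_rev)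
    ultimately show ?thesis using Pp(2)[of a] Qp(2)[of b] unfolding apath_def by auto
  qed
  have Cne: "set (C s) \<noteq> {}" if "s \<in> S" for s using Cset[of s] Pset[of s] that by auto
  have Dne: "set D \<noteq> {}" using Dset Pset[of a] by auto
  have CC: "set (C s) \<inter> set (C t) = {}" if st: "s \<in> S" "t \<in> S" "s \<noteq> t" for s t
  proof -
    have "set (P s) \<inter> set (P t) = {}" using P st by blast
    moreover have "set (Q s) \<inter> set (Q t) = {}" using Q st by blast
    ultimately show ?thesis unfolding Cset using PsR[OF st(1)] PsR[OF st(2)] QsR[OF st(1)] QsR[OF st(2)] disj RAS st
      by blast
  qed
  have CD: "set (C s) \<inter> set D = {}" if s: "s \<in> S" for s
  proof -
    have "set (P s) \<inter> set (P a) = {}" using P s \<open>a \<notin> S\<close> by (metis insertI1 insertI2)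
    moreover have "set (Q s) \<inter> set (Q b) = {}" using Q s \<open>b \<notin> S\<close> by (metis insertI1 insertI2)
    ultimately show ?thesis unfolding Cset Dset using PsR[OF s] QsR[OF s] PaR QbR disj RAS s
      by blast
  qed
  have injC: "inj_on C S"
  proof (rule inj_onI)
    fix s t assume "s \<in> S" "t \<in> S" "C s = C t"
    thus "s = t" using CC Cne by fastforce
  qed
  have DnC: "D \<notin> C ` S" using CD Dne by fastforce
  let ?PP = "insert D (C ` S)"
  show ?thesis
  proof (intro exI[of _ ?PP] conjI)
    show "finite ?PP" using \<open>finite S\<close> by simp
    show "card ?PP = Suc (card S)" using DnC card_image[OF injC] \<open>finite S\<close> by simp
    show "\<forall>p\<in>?PP. apath W E A B p" using Capath Dapath by blast
    show "dfam ?PP" unfolding dfam_def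
    proof (intro ballI impI)
      fix p q assume pq: "p \<in> ?PP" "q \<in> ?PP" "p \<noteq> q"
      show "set p \<inter> set q = {}"
      proof (cases "p = D")
        case True
        then obtain t where "t \<in> S" "q = C t" using pq by auto
        thus ?thesis using CD True by blast
      next
        case False
        then obtain s where s: "s \<in> S" "p = C s" using pq by auto
        show ?thesis
        proof (cases "q = D")
          case True thus ?thesis using CD s by blast
        next
          case False
          then obtain t where "t \<in> S" "q = C t" using pq by auto
          thus ?thesis using CC s pq by blast
        qed
      qed
    qed
  qed
qed



lemma no_edge_single:
  assumes "\<not> (\<exists>x y. x \<in> W \<and> y \<in> W \<and> E x y)" "pth W E p"
  shows "p = [hd p]"
proof (cases p)
  case Nil thus ?thesis using assms by (simp add: pth_def)
next
  case (Cons a r)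
  show ?thesis
  proof (cases r)
    case Nil thus ?thesis using Cons by simp
  next
    case (Cons b r')
    hence "E a b" "a \<in> W" "b \<in> W" using assms(2) \<open>p = a # r\<close> by (auto simp: pth_def)
    thus ?thesis using assms(1) by blast
  qed
qed

theorem set_menger:
  assumes "finite W" "\<And>u v. E u v \<Longrightarrow> E v u" "\<And>u. \<not> E u u"
    "\<forall>R. R \<subseteq> W \<longrightarrow> sep W E A B R \<longrightarrow> k \<le> card R"
  shows "\<exists>PP. finite PP \<and> card PP = k \<and> (\<forall>p\<in>PP. apath W E A B p) \<and> dfam PP"
  using assms
proof (induction "card (edges W E)" arbitrary: E A B k rule: less_induct)
  case less
  note fin = less.prems(1) and sym = less.prems(2) and irr = less.prems(3) and hyp = less.prems(4)
  show ?case
  proof (cases "\<exists>x y. x \<in> W \<and> y \<in> W \<and> E x y")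
    case False
    let ?R = "A \<inter> B \<inter> W"
    have "sep W E A B ?R" unfolding sep_def
    proof (intro allI impI)
      fix p assume p: "apath W E A B p"
      hence pe: "p = [hd p]" using no_edge_single[OF False] unfolding apath_def by blast
      hence "last p = hd p" by (metis last.simps)
      moreover have "hd p \<in> W" using p pe unfolding apath_def pth_def by (metis list.set_intros(1) subsetD)
      ultimately have "hd p \<in> ?R" using p unfolding apath_def by auto
      thus "set p \<inter> ?R \<noteq> {}" using pe by (metis disjoint_iff list.set_intros(1))
    qed
    hence "k \<le> card ?R" using hyp by blast
    then obtain R0 where R0: "R0 \<subseteq> ?R" "card R0 = k" using obtain_subset_with_card_n by metis
    have finR0: "finite R0" using R0(1) fin by (meson finite_subset inf_le2 subset_trans)
    let ?PP = "(\<lambda>a. [a]) ` R0"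
    show ?thesis
    proof (intro exI[of _ ?PP] conjI)
      show "finite ?PP" using finR0 by simp
      show "card ?PP = k" using R0(2) by (simp add: card_image inj_on_def)
      show "\<forall>p\<in>?PP. apath W E A B p" using R0(1) by (auto simp: apath_def pth_def)
      show "dfam ?PP" unfolding dfam_def by auto
    qed
  next
    case True
    then obtain x y where xy: "x \<in> W" "y \<in> W" "E x y" by blast
    define E' where "E' = rem E x y"
    have "edges W E \<subseteq> W \<times> W" unfolding edges_def by auto
    hence finE: "finite (edges W E)" using finite_cartesian_product[OF fin fin] by (rule finite_subset)
    have "edges W E' \<subset> edges W E"
    proof
      show "edges W E' \<subseteq> edges W E" unfolding edges_def E'_def rem_def by auto
      have "(x,y) \<in> edges W E" "(x,y) \<notin> edges W E'" using xy unfolding edges_def E'_def rem_def by auto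
      thus "edges W E' \<noteq> edges W E" by blast
    qed
    hence lt: "card (edges W E') < card (edges W E)" using finE by (rule psubset_card_mono[rotated])
    have symE': "\<And>u v. E' u v \<Longrightarrow> E' v u" unfolding E'_def rem_def using sym by (auto simp: insert_commute)
    have irrE': "\<And>u. \<not> E' u u" unfolding E'_def rem_def using irr by auto
    have IH: "\<And>A B k. \<forall>R. R \<subseteq> W \<longrightarrow> sep W E' A B R \<longrightarrow> k \<le> card R \<Longrightarrow>
        \<exists>PP. finite PP \<and> card PP = k \<and> (\<forall>p\<in>PP. apath W E' A B p) \<and> dfam PP"
    proof -
      fix A B k assume h: "\<forall>R. R \<subseteq> W \<longrightarrow> sep W E' A B R \<longrightarrow> k \<le> card R"
      show "\<exists>PP. finite PP \<and> card PP = k \<and> (\<forall>p\<in>PP. apath W E' A B p) \<and> dfam PP"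
        using less.hyps[OF lt fin symE' irrE' h] by blast
    qed
    show ?thesis
    proof (cases "\<forall>R. R \<subseteq> W \<longrightarrow> sep W E' A B R \<longrightarrow> k \<le> card R")
      case True
      then obtain PP where PP: "finite PP" "card PP = k" "\<forall>p\<in>PP. apath W E' A B p" "dfam PP"
        using IH[OF True] by blast
      have "\<forall>p\<in>PP. apath W E A B p"
      proof
        fix p assume "p \<in> PP"
        hence "apath W E' A B p" using PP(3) by blast
        thus "apath W E A B p" unfolding apath_def E'_def using pth_remD[of W E x y p] by blast
      qed
      thus ?thesis using PP by blast
    next
      case False
      then obtain S where S: "S \<subseteq> W" "sep W E' A B S" "card S < k" by force
      have finS: "finite S" using S(1) fin by (rule finite_subset)
      have "\<not> sep W E A B S"
      proof
        assume "sep W E A B S"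
        hence "k \<le> card S" using hyp S(1) by blast
        thus False using S(3) by simp
      qed
      then obtain p where p: "apath W E A B p" "set p \<inter> S = {}" unfolding sep_def by blast
      have "\<not> pth W E' p"
      proof
        assume "pth W E' p"
        hence "apath W E' A B p" using p unfolding apath_def by blast
        thus False using S(2) p(2) unfolding sep_def by blast
      qed
      hence "\<not> successively E' p" using p unfolding apath_def pth_def by blast
      then obtain i where i: "Suc i < length p" "\<not> E' (p ! i) (p ! Suc i)"
        unfolding successively_conv_nth by blast
      have Ei: "E (p ! i) (p ! Suc i)" using p i(1) unfolding apath_def pth_def successively_conv_nth by blast
      define a where "a = p ! i"
      define b where "b = p ! Suc i"
      have Eab: "E a b" using Ei unfolding a_def b_def .
      have abxy: "{a, b} = {x, y}" using i(2) Ei unfolding E'_def rem_def a_def b_def by auto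
      have E'ab: "E' = rem E a b" unfolding E'_def rem_def using abxy by simp
      have ab: "a \<noteq> b" using irr Eab by blast
      have dp: "distinct p" using p unfolding apath_def pth_def by blast
      have "a \<in> set p" "b \<in> set p" using i(1) unfolding a_def b_def by simp_all
      hence aS: "a \<notin> S" "b \<notin> S" using p(2) by blast+
      define r1 where "r1 = take (Suc i) p"
      define r2 where "r2 = drop (Suc i) p"
      have pr: "p = r1 @ r2" unfolding r1_def r2_def by simp
      have r1ne: "r1 \<noteq> []" "r2 \<noteq> []" using i(1) unfolding r1_def r2_def by auto
      have lr1: "last r1 = a" unfolding r1_def a_def using i(1) by (simp add: take_Suc_conv_app_nth)
      have hr2: "hd r2 = b" unfolding r2_def b_def using i(1) by (simp add: hd_drop_conv_nth)
      have dis12: "set r1 \<inter> set r2 = {}" using dp pr by (metis distinct_append)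
      have ar1: "a \<in> set r1" using lr1 r1ne(1) last_in_set by blast
      have br2: "b \<in> set r2" using hr2 r1ne(2) hd_in_set by blast
      have pr1: "pth W E r1" using pth_appendD1[of W E r1 r2] p pr r1ne unfolding apath_def by simp
      have pr2: "pth W E r2" using pth_appendD2[of W E r1 r2] p pr r1ne unfolding apath_def by simp
      have "pth W E' r1" unfolding E'ab using pth_rem[OF pr1, of a b] dis12 br2 by blast
      hence "pth (W - S) E' r1" using p(2) pr unfolding pth_def by auto
      moreover have "hd r1 = hd p" using pr r1ne by simp
      ultimately have aR: "a \<in> reachS W E' A S" using p(1) lr1 unfolding reachS_def apath_def by auto
      have "pth W E' r2" unfolding E'ab using pth_rem[OF pr2, of a b] dis12 ar1 by blast
      hence "pth (W - S) E' r2" using p(2) pr unfolding pth_def by auto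
      hence "pth (W - S) E' (rev r2)" using pth_rev[of E' "W - S" r2] symE' by blast
      moreover have "last r2 = last p" using pr r1ne by simp
      ultimately have bR: "b \<in> reachS W E' B S" using p(1) hr2 r1ne unfolding reachS_def apath_def
        by (auto simp: hd_rev last_rev intro!: exI[of _ "rev r2"])
      have sepS': "sep W (rem E a b) A B S" using S(2) E'ab by simp
      have bR': "b \<in> reachS W (rem E a b) B S" using bR E'ab by simp
      have aR': "a \<in> reachS W (rem E b a) A S" using aR E'ab rem_commute by metis
      have sepSba: "sep W (rem E b a) B A S" using sep_sym[OF symE' S(2)] E'ab rem_commute by metis
      have clA: "\<forall>R. R \<subseteq> W \<longrightarrow> sep W E' A (insert a S) R \<longrightarrow> k \<le> card R"
      proof (intro allI impI)
        fix R assume "R \<subseteq> W" "sep W E' A (insert a S) R"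
        hence "sep W E A B R" using claimA[OF sym irr sepS' aS Eab bR'] E'ab by simp
        thus "k \<le> card R" using hyp \<open>R \<subseteq> W\<close> by blast
      qed
      have clB: "\<forall>R. R \<subseteq> W \<longrightarrow> sep W E' (insert b S) B R \<longrightarrow> k \<le> card R"
      proof (intro allI impI)
        fix R assume "R \<subseteq> W" and sR: "sep W E' (insert b S) B R"
        have "sep W E' B (insert b S) R" by (rule sep_sym[OF symE' sR])
        moreover have "E' = rem E b a" using E'ab rem_commute by metis
        ultimately have "sep W (rem E b a) B (insert b S) R" by simp
        hence "sep W E B A R" using claimA[OF sym irr sepSba aS(2) aS(1) sym[OF Eab] aR'] by simp
        hence "sep W E A B R" using sep_sym[of E W B A R] sym by blast
        thus "k \<le> card R" using hyp \<open>R \<subseteq> W\<close> by blast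
      qed
      have "sep W E' A (insert a S) (insert a S)" unfolding sep_def apath_def pth_def
        by (auto dest: last_in_set)
      moreover have "insert a S \<subseteq> W" using pr1 ar1 S(1) unfolding pth_def by blast
      ultimately have "k \<le> card (insert a S)" using clA by blast
      hence k: "k = Suc (card S)" using S(3) finS aS by simp
      have cX: "card (insert a S) = k" "card (insert b S) = k" using k finS aS by simp_all
      obtain PP1 where PP1: "finite PP1" "card PP1 = k" "\<forall>p\<in>PP1. apath W E' A (insert a S) p" "dfam PP1"
        using IH[OF clA] by blast
      obtain PP2 where PP2: "finite PP2" "card PP2 = k" "\<forall>p\<in>PP2. apath W E' (insert b S) B p" "dfam PP2"
        using IH[OF clB] by blast
      have PP2': "finite (rev ` PP2)" "card (rev ` PP2) = k" "\<forall>p\<in>rev ` PP2. apath W E' B (insert b S) p"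
          "dfam (rev ` PP2)"
      proof -
        have revap: "\<And>p. apath W E' (insert b S) B p \<Longrightarrow> apath W E' B (insert b S) (rev p)"
          using apath_rev[of E' W] symE' by blast
        show "finite (rev ` PP2)" using PP2(1) by simp
        show "card (rev ` PP2) = k" using PP2(2) card_image[of rev PP2] by (simp add: inj_on_def)
        show "\<forall>p\<in>rev ` PP2. apath W E' B (insert b S) p" using PP2(3) revap by blast
        show "dfam (rev ` PP2)" using PP2(4) unfolding dfam_def by auto
      qed
      obtain P where P: "\<forall>s\<in>insert a S. pth W E' (P s) \<and> hd (P s) \<in> A \<and> last (P s) = s
          \<and> set (butlast (P s)) \<inter> insert a S = {} \<and> (\<forall>t\<in>insert a S. s \<noteq> t \<longrightarrow> set (P s) \<inter> set (P t) = {})"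
        using trim_family[OF PP1(1) _ _ PP1(3) PP1(4)] PP1(2) cX finS by auto
      obtain Q where Q: "\<forall>s\<in>insert b S. pth W E' (Q s) \<and> hd (Q s) \<in> B \<and> last (Q s) = s
          \<and> set (butlast (Q s)) \<inter> insert b S = {} \<and> (\<forall>t\<in>insert b S. s \<noteq> t \<longrightarrow> set (Q s) \<inter> set (Q t) = {})"
        using trim_family[OF PP2'(1) _ _ PP2'(3) PP2'(4)] PP2'(2) cX finS by auto
      have sub: "\<And>u v. E' u v \<Longrightarrow> E u v" unfolding E'_def rem_def by simp
      have disj: "reachS W E' A S \<inter> reachS W E' B S = {}" using reach_disjoint[OF symE' S(2)] .
      show ?thesis using combine[of E' E a b S W A B P Q, OF symE' sub Eab aS ab finS disj aR bR P Q] k by simp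
    qed
  qed
qed



lemma interior_wrap: "interior (x # q @ [y]) = set q"
  by (simp add: interior_def)

theorem two_menger:
  assumes sym: "\<And>u v. E u v \<Longrightarrow> E v u" and irr: "\<And>u. \<not> E u u"
    and xy: "x \<in> W" "y \<in> W" "x \<noteq> y" "\<not> E x y"
    and sf: "\<forall>Z. finite Z \<and> card Z < k \<and> x \<notin> Z \<and> y \<notin> Z \<longrightarrow> conn (W - Z) E x y"
  shows "\<exists>PP. finite PP \<and> card PP = k \<and> (\<forall>p\<in>PP. is_path W E p x y \<and> interior p \<noteq> {})
           \<and> (\<forall>p\<in>PP. \<forall>q\<in>PP. p \<noteq> q \<longrightarrow> interior p \<inter> interior q = {})"
proof -
  obtain F where F: "finite F" "\<forall>Ob. finite Ob \<and> card Ob \<le> k - 1 \<longrightarrow>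
      (\<exists>p. is_path W E p x y \<and> (set p - {x,y}) \<inter> Ob = {}) \<longrightarrow>
      (\<exists>p. is_path W E p x y \<and> (set p - {x,y}) \<subseteq> F \<and> (set p - {x,y}) \<inter> Ob = {})"
    using finite_witness[of "\<lambda>p. is_path W E p x y" "\<lambda>p. set p - {x,y}" "k - 1"] by blast
  define W0 where "W0 = W \<inter> (F \<union> {x,y})"
  have finW0: "finite W0" unfolding W0_def using F(1) by simp
  have sf0: "conn (W0 - Z) E x y" if Z: "finite Z" "card Z < k" "x \<notin> Z" "y \<notin> Z" for Z
  proof -
    obtain p where p: "is_path (W - Z) E p x y" using sf Z unfolding conn_def by blast
    hence "is_path W E p x y" "(set p - {x,y}) \<inter> Z = {}" unfolding is_path_pth pth_def by auto
    moreover have "finite Z \<and> card Z \<le> k - 1" using Z by simp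
    ultimately obtain q where q: "is_path W E q x y" "set q - {x,y} \<subseteq> F" "(set q - {x,y}) \<inter> Z = {}"
      using F(2) by blast
    have "set q \<subseteq> W0 - Z" using q xy Z unfolding W0_def is_path_pth pth_def by auto
    hence "is_path (W0 - Z) E q x y" using q(1) unfolding is_path_pth pth_def by auto
    thus ?thesis unfolding conn_def by blast
  qed
  define W1 where "W1 = W0 - {x,y}"
  define A where "A = {w \<in> W1. E x w}"
  define B where "B = {w \<in> W1. E w y}"
  have finW1: "finite W1" unfolding W1_def using finW0 by simp
  have hyp: "\<forall>R. R \<subseteq> W1 \<longrightarrow> sep W1 E A B R \<longrightarrow> k \<le> card R"
  proof (intro allI impI)
    fix R assume R: "R \<subseteq> W1" "sep W1 E A B R"
    show "k \<le> card R"
    proof (rule ccontr)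
      assume "\<not> k \<le> card R"
      hence "card R < k" by simp
      moreover have "finite R" using R(1) finW1 by (rule finite_subset)
      moreover have "x \<notin> R" "y \<notin> R" using R(1) unfolding W1_def by auto
      ultimately have "conn (W0 - R) E x y" using sf0 by blast
      then obtain p where p: "pth (W0 - R) E p" "hd p = x" "last p = y" unfolding conn_def is_path_pth by blast
      obtain r where r: "p = x # r" using p by (cases p) (auto simp: pth_def)
      have "r \<noteq> []" using r p xy by auto
      then obtain q where q: "r = q @ [y]" using p r by (metis append_butlast_last_id last_ConsR)
      have pp: "pth (W0 - R) E (x # q @ [y])" using p r q by simp
      have "q \<noteq> []"
      proof
        assume "q = []"
        hence "E x y" using pp unfolding pth_def by simp
        thus False using xy by simp
      qed
      have d: "distinct (x # q @ [y])" using pp unfolding pth_def by blast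
      have sq: "set q \<subseteq> W1 - R" using pp d unfolding pth_def W1_def by auto
      have sc: "successively E (x # q @ [y])" using pp unfolding pth_def by blast
      have "E x (hd q)" using sc \<open>q \<noteq> []\<close> by (cases q) auto
      moreover have "E (last q) y" using sc \<open>q \<noteq> []\<close> by (simp add: successively_append_iff successively_Cons)
      moreover have "successively E q" using sc by (simp add: successively_append_iff successively_Cons)
      ultimately have "apath W1 E A B q" using sq d \<open>q \<noteq> []\<close> unfolding apath_def pth_def A_def B_def
        by (auto intro: hd_in_set last_in_set)
      moreover have "set q \<inter> R = {}" using sq by blast
      ultimately show False using R(2) unfolding sep_def by blast
    qed
  qed
  obtain PP where PP: "finite PP" "card PP = k" "\<forall>p\<in>PP. apath W1 E A B p" "dfam PP"
    using set_menger[OF finW1 sym irr hyp] by blast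
  let ?g = "\<lambda>q. x # q @ [y]"
  have inj: "inj_on ?g PP" by (auto simp: inj_on_def)
  have good: "is_path W E (?g q) x y \<and> interior (?g q) \<noteq> {}" if "q \<in> PP" for q
  proof -
    have q: "pth W1 E q" "hd q \<in> A" "last q \<in> B" using PP(3) that unfolding apath_def by auto
    hence qne: "q \<noteq> []" unfolding pth_def by blast
    have "set q \<subseteq> W1" "distinct q" "successively E q" using q unfolding pth_def by auto
    moreover have "W1 \<subseteq> W" "x \<notin> W1" "y \<notin> W1" unfolding W1_def W0_def by auto
    moreover have "E x (hd q)" "E (last q) y" using q(2,3) unfolding A_def B_def by auto
    ultimately have "pth W E (?g q)" using xy qne unfolding pth_def
      by (auto simp: successively_append_iff successively_Cons)
    thus ?thesis using qne by (simp add: is_path_pth interior_wrap)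
  qed
  show ?thesis
  proof (intro exI[of _ "?g ` PP"] conjI)
    show "finite (?g ` PP)" using PP(1) by simp
    show "card (?g ` PP) = k" using card_image[OF inj] PP(2) by simp
    show "\<forall>p\<in>?g ` PP. is_path W E p x y \<and> interior p \<noteq> {}" using good by blast
    show "\<forall>p\<in>?g ` PP. \<forall>q\<in>?g ` PP. p \<noteq> q \<longrightarrow> interior p \<inter> interior q = {}"
    proof (intro ballI impI)
      fix p q assume pq: "p \<in> ?g ` PP" "q \<in> ?g ` PP" "p \<noteq> q"
      then obtain p' q' where p': "p' \<in> PP" "p = ?g p'" and q': "q' \<in> PP" "q = ?g q'" by blast
      hence "p' \<noteq> q'" using pq(3) by blast
      hence "set p' \<inter> set q' = {}" using PP(4) p'(1) q'(1) unfolding dfam_def by blast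
      thus "interior p \<inter> interior q = {}" using p'(2) q'(2) by (simp add: interior_wrap)
    qed
  qed
qed

lemma three_linked:
  assumes sym: "\<And>u v. E u v \<Longrightarrow> E v u" and irr: "\<And>u. \<not> E u u"
    and xy: "x \<in> W" "y \<in> W" "x \<noteq> y"
    and nonadj: "\<not> E x y \<Longrightarrow> \<forall>Z. finite Z \<and> card Z \<le> 2 \<and> x \<notin> Z \<and> y \<notin> Z \<longrightarrow> conn (W - Z) E x y"
    and adj: "E x y \<Longrightarrow> \<forall>Z. finite Z \<and> card Z \<le> 1 \<and> x \<notin> Z \<and> y \<notin> Z \<longrightarrow> conn (W - Z) (rem E x y) x y"
  shows "\<exists>p1 p2 p3. is_path W E p1 x y \<and> is_path W E p2 x y \<and> is_path W E p3 x y
        \<and> p1 \<noteq> p2 \<and> p1 \<noteq> p3 \<and> p2 \<noteq> p3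
        \<and> interior p1 \<inter> interior p2 = {} \<and> interior p1 \<inter> interior p3 = {}
        \<and> interior p2 \<inter> interior p3 = {}"
proof (cases "E x y")
  case False
  have "\<forall>Z. finite Z \<and> card Z < 3 \<and> x \<notin> Z \<and> y \<notin> Z \<longrightarrow> conn (W - Z) E x y"
  proof (intro allI impI)
    fix Z assume "finite Z \<and> card Z < 3 \<and> x \<notin> Z \<and> y \<notin> Z"
    hence "finite Z \<and> card Z \<le> 2 \<and> x \<notin> Z \<and> y \<notin> Z" by simp
    thus "conn (W - Z) E x y" using nonadj[OF False] by blast
  qed
  from two_menger[OF sym irr xy False this] obtain PP where PP: "finite PP" "card PP = 3" "\<forall>p\<in>PP. is_path W E p x y \<and> interior p \<noteq> {}"
      "\<forall>p\<in>PP. \<forall>q\<in>PP. p \<noteq> q \<longrightarrow> interior p \<inter> interior q = {}"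
    by blast
  then obtain p1 p2 p3 where pe: "PP = {p1,p2,p3}" and ne: "p1 \<noteq> p2" "p2 \<noteq> p3" "p1 \<noteq> p3"
    unfolding card_3_iff by blast
  have m: "p1 \<in> PP" "p2 \<in> PP" "p3 \<in> PP" using pe by simp_all
  have i: "is_path W E p1 x y" "is_path W E p2 x y" "is_path W E p3 x y" using PP(3) m by blast+
  have d: "interior p1 \<inter> interior p2 = {}" "interior p1 \<inter> interior p3 = {}" "interior p2 \<inter> interior p3 = {}"
    using PP(4) m ne by blast+
  show ?thesis using i d ne by blast
next
  case True
  let ?E = "rem E x y"
  have symE: "\<And>u v. ?E u v \<Longrightarrow> ?E v u" unfolding rem_def using sym by (auto simp: insert_commute)
  have irrE: "\<And>u. \<not> ?E u u" unfolding rem_def using irr by auto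
  have nE: "\<not> ?E x y" unfolding rem_def by simp
  have "\<forall>Z. finite Z \<and> card Z < 2 \<and> x \<notin> Z \<and> y \<notin> Z \<longrightarrow> conn (W - Z) ?E x y"
  proof (intro allI impI)
    fix Z assume "finite Z \<and> card Z < 2 \<and> x \<notin> Z \<and> y \<notin> Z"
    hence "finite Z \<and> card Z \<le> 1 \<and> x \<notin> Z \<and> y \<notin> Z" by simp
    thus "conn (W - Z) ?E x y" using adj[OF True] by blast
  qed
  from two_menger[OF symE irrE xy nE this] obtain PP where PP: "finite PP" "card PP = 2" "\<forall>p\<in>PP. is_path W ?E p x y \<and> interior p \<noteq> {}"
      "\<forall>p\<in>PP. \<forall>q\<in>PP. p \<noteq> q \<longrightarrow> interior p \<inter> interior q = {}"
    by blast
  then obtain p1 p2 where pp: "PP = {p1,p2}" "p1 \<noteq> p2"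
    unfolding card_2_iff by blast
  have ip: "is_path W E p x y" if "p \<in> PP" for p
    using PP(3) that pth_remD[of W E x y p] unfolding is_path_pth by blast
  have e: "is_path W E [x,y] x y" using True xy by (simp add: is_path_pth pth_def)
  have ie: "interior [x,y] = {}" by (simp add: interior_def)
  have m: "p1 \<in> PP" "p2 \<in> PP" using pp by simp_all
  have i: "is_path W E p1 x y" "is_path W E p2 x y" using ip m by blast+
  have ni: "interior p1 \<noteq> {}" "interior p2 \<noteq> {}" using PP(3) m by blast+
  have d: "interior p1 \<inter> interior p2 = {}" using PP(4) m pp(2) by blast
  have ne: "p1 \<noteq> [x,y]" "p2 \<noteq> [x,y]" using ni ie by auto
  show ?thesis using i e d ie ne pp(2) by blast
qed



definition Ed :: "('a \<Rightarrow> 'a \<Rightarrow> bool) \<Rightarrow> 'a set set \<Rightarrow> 'a \<Rightarrow> 'a \<Rightarrow> bool" where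
  "Ed E D = (\<lambda>a b. E a b \<and> {a, b} \<notin> D)"

definition supp :: "'a list \<Rightarrow> 'a set set" where
  "supp p = (\<lambda>w. {w}) ` set p \<union> (\<lambda>i. {p ! i, p ! Suc i}) ` {i. Suc i < length p}"

lemma finite_supp: "finite (supp p)"
proof -
  have "{i. Suc i < length p} \<subseteq> {..<length p}" by auto
  hence "finite {i. Suc i < length p}" using finite_subset by blast
  thus ?thesis unfolding supp_def by simp
qed

lemma Ed_empty: "Ed E {} = E"
  unfolding Ed_def by simp

lemma Ed_rem: "Ed E {{x, y}} = rem E x y"
  unfolding Ed_def rem_def by simp

lemma Ed_sym: "(\<And>u v. E u v \<Longrightarrow> E v u) \<Longrightarrow> Ed E D a b \<Longrightarrow> Ed E D b a"
  unfolding Ed_def by (auto simp: insert_commute)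

lemma supp_from:
  assumes "is_path (W - Z) (Ed E D) p u v" and Dno: "\<forall>d\<in>D. \<forall>w. d \<noteq> {w}"
  shows "is_path W E p u v \<and> supp p \<inter> ((\<lambda>z. {z}) ` Z \<union> D) = {}"
proof
  have pp: "pth (W - Z) (Ed E D) p" "hd p = u" "last p = v" using assms(1) unfolding is_path_pth by auto
  have "pth W E p"
  proof (rule pth_mono[OF pp(1)])
    show "set p \<subseteq> W" using pp(1) unfolding pth_def by blast
  qed (simp add: Ed_def)
  thus "is_path W E p u v" using pp by (simp add: is_path_pth)
  show "supp p \<inter> ((\<lambda>z. {z}) ` Z \<union> D) = {}"
  proof (rule ccontr)
    assume "supp p \<inter> ((\<lambda>z. {z}) ` Z \<union> D) \<noteq> {}"
    then obtain d where d: "d \<in> supp p" "d \<in> (\<lambda>z. {z}) ` Z \<union> D" by blast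
    show False
    proof (cases "d \<in> (\<lambda>w. {w}) ` set p")
      case True
      then obtain w where w: "w \<in> set p" "d = {w}" by blast
      have "w \<notin> Z" using w(1) pp(1) unfolding pth_def by blast
      thus False using d(2) w Dno by auto
    next
      case False
      then obtain i where i: "Suc i < length p" "d = {p ! i, p ! Suc i}" using d(1) unfolding supp_def by blast
      have ne: "p ! i \<noteq> p ! Suc i" using pp(1) i(1) unfolding pth_def by (simp add: nth_eq_iff_index_eq)
      have "Ed E D (p ! i) (p ! Suc i)" using pp(1) i(1) unfolding pth_def by (simp add: successively_nth)
      hence "d \<notin> D" using i(2) unfolding Ed_def by simp
      moreover have "d \<notin> (\<lambda>z. {z}) ` Z"
      proof
        assume "d \<in> (\<lambda>z. {z}) ` Z"
        then obtain z where "d = {z}" by blast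
        hence "p ! i \<in> {z}" "p ! Suc i \<in> {z}" using i(2) by blast+
        thus False using ne by simp
      qed
      ultimately show False using d(2) by blast
    qed
  qed
qed

lemma supp_to:
  assumes "is_path W E p u v" "supp p \<inter> ((\<lambda>z. {z}) ` Z \<union> D) = {}"
  shows "is_path (W - Z) (Ed E D) p u v"
proof -
  have pp: "pth W E p" "hd p = u" "last p = v" using assms(1) unfolding is_path_pth by auto
  have "set p \<inter> Z = {}"
  proof (rule ccontr)
    assume "set p \<inter> Z \<noteq> {}"
    then obtain w where "w \<in> set p" "w \<in> Z" by blast
    hence "{w} \<in> supp p \<inter> ((\<lambda>z. {z}) ` Z \<union> D)" unfolding supp_def by blast
    thus False using assms(2) by blast
  qed
  hence s: "set p \<subseteq> W - Z" using pp(1) unfolding pth_def by blast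
  have "successively (Ed E D) p" unfolding successively_conv_nth
  proof (intro allI impI)
    fix i assume i: "Suc i < length p"
    have "E (p ! i) (p ! Suc i)" using pp(1) i unfolding pth_def by (simp add: successively_nth)
    moreover have "{p ! i, p ! Suc i} \<in> supp p" using i unfolding supp_def by blast
    ultimately show "Ed E D (p ! i) (p ! Suc i)" using assms(2) unfolding Ed_def by blast
  qed
  thus ?thesis using pp s unfolding is_path_pth pth_def by simp
qed

lemma component_internal:
  assumes sym: "\<And>u v. E u v \<Longrightarrow> E v u" and H: "H = {w. conn U E x0 w}" and h: "h \<in> H" "h' \<in> H"
  shows "conn H E h h'"
proof -
  have c0: "conn U E x0 h" "conn U E x0 h'" using H h by auto
  have "conn U E h h'" using conn_trans[OF conn_sym[OF sym c0(1)] c0(2)] by simp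
  then obtain q where q: "pth U E q" "hd q = h" "last q = h'" unfolding conn_def is_path_pth by blast
  have "set q \<subseteq> H"
  proof
    fix w assume w: "w \<in> set q"
    obtain r where r: "pth U E r" "hd r = hd q" "last r = w" using pth_prefix_to[OF q(1) w] by blast
    have "conn U E h w" using conn_pth[OF r(1)] r q(2) by simp
    hence "conn U E x0 w" using conn_trans[OF c0(1)] by blast
    thus "w \<in> H" using H by simp
  qed
  hence "pth H E q" using q(1) unfolding pth_def by blast
  thus ?thesis using q unfolding conn_def is_path_pth by blast
qed

lemma through_H:
  assumes Hc: "\<And>h h'. h \<in> H \<Longrightarrow> h' \<in> H \<Longrightarrow> conn H E h h'" and HU: "H \<subseteq> U"
    and x: "x \<in> U" "x \<notin> H" and y: "y \<in> U" "y \<notin> H"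
    and h: "h \<in> H" "E x h" and h': "h' \<in> H" "E h' y"
  shows "conn U (rem E x y) x y"
proof -
  obtain q where q: "pth H E q" "hd q = h" "last q = h'" using Hc[OF h(1) h'(1)] unfolding conn_def is_path_pth by blast
  have "pth H (rem E x y) q"
  proof (rule pth_mono[OF q(1)])
    show "set q \<subseteq> H" using q(1) unfolding pth_def by blast
    fix u v assume uv: "u \<in> set q" "v \<in> set q" "E u v"
    hence "u \<in> H" "v \<in> H" using q(1) unfolding pth_def by blast+
    have "{u, v} \<noteq> {x, y}"
    proof
      assume "{u, v} = {x, y}"
      hence "x \<in> {u, v}" by blast
      thus False using \<open>u \<in> H\<close> \<open>v \<in> H\<close> x(2) by blast
    qed
    thus "rem E x y u v" using uv(3) unfolding rem_def by simp
  qed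
  hence "conn H (rem E x y) h h'" using conn_pth[of H "rem E x y" q] q(2,3) by simp
  hence c1: "conn U (rem E x y) h h'" by (rule conn_mono[OF _ HU])
  have "{x, h} \<noteq> {x, y}"
  proof
    assume eq: "{x, h} = {x, y}"
    hence "y \<in> {x, h}" by blast
    moreover have "h \<in> {x, y}" using eq by blast
    ultimately show False using h(1) x(2) y(2) by blast
  qed
  hence "rem E x y x h" using h(2) unfolding rem_def by simp
  moreover have "h \<in> U" using h(1) HU by blast
  ultimately have c0: "conn U (rem E x y) x h" using conn_edge[of x U h "rem E x y"] x(1) by blast
  have "{h', y} \<noteq> {x, y}"
  proof
    assume eq: "{h', y} = {x, y}"
    hence "x \<in> {h', y}" by blast
    moreover have "h' \<in> {x, y}" using eq by blast
    ultimately show False using h'(1) x(2) y(2) by blast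
  qed
  hence "rem E x y h' y" using h'(2) unfolding rem_def by simp
  moreover have "h' \<in> U" using h'(1) HU by blast
  ultimately have c2: "conn U (rem E x y) h' y" using conn_edge[of h' U y "rem E x y"] y(1) by blast
  show ?thesis using conn_trans[OF conn_trans[OF c0 c1] c2] .
qed

lemma hitS:
  assumes sym: "\<And>u v. E u v \<Longrightarrow> E v u" and sub: "\<And>a b. E2 a b \<Longrightarrow> E a b"
    and c: "conn (V - Z) E2 x y" and "x \<notin> S" "y \<notin> S" and nc: "\<not> conn (V - S - Z) E2 x y"
  shows "\<exists>u v. u \<in> nbhd E S \<and> v \<in> nbhd E S \<and> conn (V - S - Z) E2 x u \<and> conn (V - S - Z) E2 v y"
proof -
  obtain p where p: "pth (V - Z) E2 p" "hd p = x" "last p = y" using c unfolding conn_def is_path_pth by blast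
  have "set p \<inter> S \<noteq> {}"
  proof
    assume "set p \<inter> S = {}"
    hence "pth (V - S - Z) E2 p" using p(1) unfolding pth_def by blast
    hence "conn (V - S - Z) E2 (hd p) (last p)" by (rule conn_pth)
    thus False using nc p(2,3) by simp
  qed
  hence ex: "\<exists>s\<in>set p. s \<in> S" by blast
  obtain ys s zs where d1: "p = ys @ s # zs" "s \<in> S" "\<forall>w\<in>set ys. w \<notin> S"
    using split_list_first_prop[OF ex] by blast
  obtain ys' s' zs' where d2: "p = ys' @ s' # zs'" "s' \<in> S" "\<forall>w\<in>set zs'. w \<notin> S"
    using split_list_last_prop[OF ex] by blast
  have ysne: "ys \<noteq> []" using d1 p(2) \<open>x \<notin> S\<close> by (cases ys) auto
  have zsne: "zs' \<noteq> []" using d2 p(3) \<open>y \<notin> S\<close> by (cases zs') auto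
  have py: "pth (V - Z) E2 ys" using pth_appendD1[of "V - Z" E2 ys "s # zs"] p(1) d1(1) ysne by simp
  hence py': "pth (V - S - Z) E2 ys" using d1(3) unfolding pth_def by blast
  have pz: "pth (V - Z) E2 zs'" using pth_appendD2[of "V - Z" E2 "ys' @ [s']" zs'] p(1) d2(1) zsne by simp
  hence pz': "pth (V - S - Z) E2 zs'" using d2(3) unfolding pth_def by blast
  have sc: "successively E2 p" using p(1) unfolding pth_def by blast
  have "E2 (last ys) s" using sc d1(1) ysne by (simp add: successively_append_iff successively_Cons)
  hence "E s (last ys)" using sym[OF sub] by blast
  moreover have "last ys \<notin> S" using d1(3) ysne by simp
  ultimately have u: "last ys \<in> nbhd E S" using d1(2) unfolding nbhd_def nbrs_def by blast
  have "E2 s' (hd zs')" using sc d2(1) zsne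
    by (simp add: successively_append_iff successively_Cons)
  hence "E s' (hd zs')" using sub by blast
  moreover have "hd zs' \<notin> S" using d2(3) zsne by simp
  ultimately have v: "hd zs' \<in> nbhd E S" using d2(2) unfolding nbhd_def nbrs_def by blast
  have "hd ys = x" using p(2) d1(1) ysne by simp
  hence cu: "conn (V - S - Z) E2 x (last ys)" using conn_pth[OF py'] by simp
  have "last zs' = y" using p(3) d2(1) zsne by simp
  hence cv: "conn (V - S - Z) E2 (hd zs') y" using conn_pth[OF pz'] by simp
  show ?thesis using u v cu cv by blast
qed

lemma S1a:
  assumes "three_connected V E" "finite Z" "card Z \<le> 2" "x \<in> V" "y \<in> V" "x \<notin> Z" "y \<notin> Z"
  shows "conn (V - Z) E x y"
proof -
  have "card (Z \<inter> V) \<le> card Z" using assms(2) by (simp add: card_mono)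
  hence "Z \<inter> V \<subseteq> V \<and> finite (Z \<inter> V) \<and> card (Z \<inter> V) < 3" using assms(2,3) by simp
  hence "connected_in (V - (Z \<inter> V)) E" using assms(1) unfolding three_connected_def by blast
  moreover have "V - (Z \<inter> V) = V - Z" by blast
  ultimately show ?thesis using assms(4-7) unfolding connected_in_def conn_def by auto
qed

lemma S1b:
  assumes g: "graph V E" and cu: "cubic V E" and tc: "three_connected V E" and e: "E x y"
    and Z: "finite Z" "card Z \<le> 1" "x \<notin> Z" "y \<notin> Z"
  shows "conn (V - Z) (rem E x y) x y"
proof -
  have xV: "x \<in> V" "y \<in> V" "x \<noteq> y" using g e unfolding graph_def by auto
  have fn: "finite (nbrs E x)" "card (nbrs E x) = 3" using cu xV unfolding cubic_def by auto
  have "\<not> nbrs E x \<subseteq> insert y Z"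
  proof
    assume "nbrs E x \<subseteq> insert y Z"
    hence "card (nbrs E x) \<le> card (insert y Z)" using Z(1) by (simp add: card_mono)
    also have "\<dots> \<le> Suc (card Z)" using Z(1) by (simp add: card_insert_if)
    finally show False using fn Z(2) by simp
  qed
  then obtain w where w: "w \<in> nbrs E x" "w \<noteq> y" "w \<notin> Z" by blast
  have Exw: "E x w" using w(1) unfolding nbrs_def by simp
  hence wV: "w \<in> V" "w \<noteq> x" using g unfolding graph_def by auto
  let ?X = "insert x (Z \<inter> V)"
  have "card ?X \<le> Suc (card (Z \<inter> V))" using Z(1) by (simp add: card_insert_if)
  moreover have "card (Z \<inter> V) \<le> card Z" using Z(1) by (simp add: card_mono)
  ultimately have "?X \<subseteq> V \<and> finite ?X \<and> card ?X < 3" using Z xV by simp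
  hence "connected_in (V - ?X) E" using tc unfolding three_connected_def by blast
  moreover have "w \<in> V - ?X" "y \<in> V - ?X" using wV w xV Z by auto
  ultimately obtain p where p: "is_path (V - ?X) E p w y" unfolding connected_in_def by blast
  hence pp: "pth (V - ?X) E p" "hd p = w" "last p = y" unfolding is_path_pth by auto
  have "x \<notin> set p" using pp(1) unfolding pth_def by blast
  hence "pth (V - ?X) (rem E x y) p" using pth_rem[OF pp(1)] by blast
  hence "pth (V - Z) (rem E x y) p" unfolding pth_def by blast
  hence c1: "conn (V - Z) (rem E x y) w y" using conn_pth pp by metis
  have "rem E x y x w" using Exw w(2) wV unfolding rem_def by (auto simp: doubleton_eq_iff)
  moreover have "x \<in> V - Z" "w \<in> V - Z" using xV wV w Z by auto
  ultimately have c0: "conn (V - Z) (rem E x y) x w" using conn_edge[of x "V - Z" w "rem E x y"] by blast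
  show ?thesis using conn_trans[OF c0 c1] .
qed



theorem lemma10:
  fixes V :: "'a set" and E :: "'a \<Rightarrow> 'a \<Rightarrow> bool" and S :: "'a set"
  assumes "graph V E" and "cubic V E" and "three_connected V E"
    and "finite S" and "S \<subseteq> V"
  shows "\<exists>T. finite T \<and> T \<subseteq> V \<and> S \<union> nbhd E S \<subseteq> T \<and>
           (\<forall>H. component_of (V - T) E H \<longrightarrow> set_three_connected_in (nbhd E H) (V - S) E)"
proof -
  have sym: "\<And>u v. E u v \<Longrightarrow> E v u" using assms(1) unfolding graph_def by blast
  have irr: "\<And>u. \<not> E u u" using assms(1) unfolding graph_def by blast
  have EV: "\<And>u v. E u v \<Longrightarrow> u \<in> V \<and> v \<in> V" using assms(1) unfolding graph_def by blast
  define N where "N = nbhd E S"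
  have "N \<subseteq> (\<Union>s\<in>S. nbrs E s)" unfolding N_def nbhd_def by blast
  moreover have "finite (\<Union>s\<in>S. nbrs E s)" using assms(2,4,5) unfolding cubic_def by blast
  ultimately have finN: "finite N" by (rule finite_subset)
  have NV: "N \<subseteq> V" unfolding N_def nbhd_def nbrs_def using EV by blast
  define V' where "V' = V - S"
  define Q where "Q u v F \<longleftrightarrow> finite F \<and> (\<forall>Ob. finite Ob \<and> card Ob \<le> 2 \<longrightarrow>
      (\<exists>p. is_path V' E p u v \<and> supp p \<inter> Ob = {}) \<longrightarrow>
      (\<exists>p. is_path V' E p u v \<and> supp p \<subseteq> F \<and> supp p \<inter> Ob = {}))" for u v F
  have exQ: "\<exists>F. Q u v F" for u v
    unfolding Q_def using finite_witness[of "\<lambda>p. is_path V' E p u v" supp 2] finite_supp by blast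
  define Fc where "Fc u v = (SOME F. Q u v F)" for u v
  have Fc: "Q u v (Fc u v)" for u v unfolding Fc_def using someI_ex[OF exQ] .
  define T where "T = S \<union> N \<union> (V \<inter> {w. \<exists>u\<in>N. \<exists>v\<in>N. {w} \<in> Fc u v})"
  have "{w. \<exists>u\<in>N. \<exists>v\<in>N. {w} \<in> Fc u v} = (\<Union>u\<in>N. \<Union>v\<in>N. (\<lambda>w. {w}) -` Fc u v)" by auto
  moreover have "finite ((\<lambda>w. {w}) -` Fc u v)" for u v
    using Fc[of u v] unfolding Q_def by (intro finite_vimageI) (auto simp: inj_on_def)
  ultimately have "finite {w. \<exists>u\<in>N. \<exists>v\<in>N. {w} \<in> Fc u v}" using finN by simp
  hence finT: "finite T" unfolding T_def using assms(4) finN by simp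
  have TV: "T \<subseteq> V" unfolding T_def using assms(5) NV by blast
  have ST: "S \<union> nbhd E S \<subseteq> T" unfolding T_def N_def by blast
  show ?thesis
  proof (intro exI[of _ T] conjI allI impI)
    show "finite T" "T \<subseteq> V" "S \<union> nbhd E S \<subseteq> T" by fact+
    fix H assume "component_of (V - T) E H"
    then obtain x0 where x0: "x0 \<in> V - T" "H = {y. \<exists>p. is_path (V - T) E p x0 y}"
      unfolding component_of_def by blast
    hence Hd: "H = {w. conn (V - T) E x0 w}" unfolding conn_def by simp
    have HT: "H \<subseteq> V - T"
    proof
      fix w assume "w \<in> H"
      hence "conn (V - T) E x0 w" using Hd by simp
      thus "w \<in> V - T" by (rule conjunct2[OF conn_in])
    qed
    have "S \<subseteq> T" "N \<subseteq> T" unfolding T_def by blast+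
    hence HV': "H \<subseteq> V'" using HT unfolding V'_def by blast
    have Hc: "\<And>h h'. h \<in> H \<Longrightarrow> h' \<in> H \<Longrightarrow> conn H E h h'" using component_internal[of E H "V - T" x0, OF sym Hd] by blast
    have nbH: "x \<notin> H \<and> (\<exists>h\<in>H. E x h)" if "x \<in> nbhd E H" for x
    proof -
      from that obtain v where "v \<in> H" "E v x" "x \<notin> H" unfolding nbhd_def nbrs_def by blast
      thus ?thesis using sym[of v x] by blast
    qed
    have nbV: "x \<in> V'" if xn: "x \<in> nbhd E H" for x
    proof -
      obtain h where h: "h \<in> H" "E x h" using nbH[OF xn] by blast
      have "x \<in> V" using EV h(2) by blast
      moreover have "x \<notin> S"
      proof
        assume "x \<in> S"
        moreover have "h \<notin> S" using h(1) HT \<open>S \<subseteq> T\<close> by blast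
        ultimately have "h \<in> N" using h(2) unfolding N_def nbhd_def nbrs_def by blast
        thus False using h(1) HT \<open>N \<subseteq> T\<close> by blast
      qed
      ultimately show ?thesis unfolding V'_def by blast
    qed
    have FcH: "\<exists>p. is_path V' E p u v \<and> supp p \<inter> Ob = {} \<and> set p \<inter> H = {}"
      if uv: "u \<in> N" "v \<in> N" and Ob: "finite Ob" "card Ob \<le> 2" and ex: "\<exists>p. is_path V' E p u v \<and> supp p \<inter> Ob = {}"
      for u v Ob
    proof -
      have "finite Ob \<and> card Ob \<le> 2 \<longrightarrow>
        (\<exists>p. is_path V' E p u v \<and> supp p \<inter> Ob = {}) \<longrightarrow>
        (\<exists>p. is_path V' E p u v \<and> supp p \<subseteq> Fc u v \<and> supp p \<inter> Ob = {})"
        using Fc[of u v] unfolding Q_def by (elim conjE allE)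
      then obtain p where p: "is_path V' E p u v" "supp p \<subseteq> Fc u v" "supp p \<inter> Ob = {}"
        using Ob ex by blast
      have "set p \<subseteq> T"
      proof
        fix w assume w: "w \<in> set p"
        hence "{w} \<in> Fc u v" using p(2) unfolding supp_def by blast
        moreover have "w \<in> V" using w p(1) unfolding is_path_pth pth_def V'_def by blast
        ultimately show "w \<in> T" using uv unfolding T_def by blast
      qed
      hence "set p \<inter> H = {}" using HT by blast
      thus ?thesis using p by blast
    qed
    show "set_three_connected_in (nbhd E H) (V - S) E"
      unfolding set_three_connected_in_def
    proof (intro ballI impI)
      fix x y assume x: "x \<in> nbhd E H" and y: "y \<in> nbhd E H" and xy: "x \<noteq> y"
      obtain h where h: "h \<in> H" "E x h" using nbH[OF x] by blast
      obtain h0 where h0: "h0 \<in> H" "E y h0" using nbH[OF y] by blast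
      have h': "h0 \<in> H" "E h0 y" using h0 sym[of y h0] by blast+
      have xH: "x \<notin> H" "y \<notin> H" using nbH x y by blast+
      have xV: "x \<in> V - S" "y \<in> V - S" using nbV x y unfolding V'_def by blast+
      have through: "conn (V - S - Z') (rem E x y) x y" if "Z' \<inter> H = {}" "x \<notin> Z'" "y \<notin> Z'" for Z'
      proof (rule through_H[OF Hc _ _ xH(1) _ xH(2) h h'])
        show "H \<subseteq> V - S - Z'" using HV' that unfolding V'_def by blast
        show "x \<in> V - S - Z'" "y \<in> V - S - Z'" using xV that by blast+
      qed
      have MC: "conn (V - S - Z) (Ed E D) x y"
        if D: "D \<subseteq> {{x, y}}" and Z: "finite Z" "card Z + card D \<le> 2" "x \<notin> Z" "y \<notin> Z"
          and cV: "conn (V - Z) (Ed E D) x y" for Z D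
      proof (rule ccontr)
        assume nc: "\<not> conn (V - S - Z) (Ed E D) x y"
        have subEd: "\<And>a b. Ed E D a b \<Longrightarrow> E a b" unfolding Ed_def by blast
        have symEd: "\<And>a b. Ed E D a b \<Longrightarrow> Ed E D b a" using Ed_sym[of E] sym by blast
        have xS: "x \<notin> S" "y \<notin> S" using xV by blast+
        obtain u v where uv: "u \<in> nbhd E S" "v \<in> nbhd E S" "conn (V - S - Z) (Ed E D) x u"
            "conn (V - S - Z) (Ed E D) v y"
          using hitS[of E "Ed E D" V Z x y S, OF sym subEd cV xS nc] by blast
        define Z' where "Z' = Z - H"
        have remEd: "\<And>a b. rem E x y a b \<Longrightarrow> Ed E D a b" using D unfolding rem_def Ed_def by blast
        have sub': "V - S - Z \<subseteq> V - S - Z'" unfolding Z'_def by blast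
        have c1: "conn (V - S - Z') (Ed E D) u x"
          by (rule conn_mono[OF conn_sym[of "Ed E D", OF symEd uv(3)] sub'])
        have "conn (V - S - Z') (rem E x y) x y" using through[of Z'] Z unfolding Z'_def by blast
        hence c2: "conn (V - S - Z') (Ed E D) x y" by (rule conn_mono) (auto intro: remEd)
        have c3: "conn (V - S - Z') (Ed E D) y v"
          by (rule conn_mono[OF conn_sym[of "Ed E D", OF symEd uv(4)] sub'])
        have "conn (V - S - Z') (Ed E D) u v" using conn_trans[OF conn_trans[OF c1 c2] c3] .
        then obtain p where p: "is_path (V' - Z') (Ed E D) p u v" unfolding conn_def V'_def by blast
        have Dno: "\<forall>d\<in>D. \<forall>w. d \<noteq> {w}" using D xy by (auto simp: doubleton_eq_iff)
        let ?Ob = "(\<lambda>z. {z}) ` Z' \<union> D"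
        have pe: "is_path V' E p u v \<and> supp p \<inter> ?Ob = {}" using supp_from[OF p Dno] .
        have finD: "finite D" using D finite_subset by blast
        have finZ': "finite Z'" using Z(1) unfolding Z'_def by simp
        have "card ?Ob \<le> card ((\<lambda>z. {z}) ` Z') + card D" by (rule card_Un_le)
        also have "card ((\<lambda>z. {z}) ` Z') \<le> card Z'" by (rule card_image_le[OF finZ'])
        also have "card Z' \<le> card Z" unfolding Z'_def using Z(1) by (simp add: card_mono)
        finally have cOb: "card ?Ob \<le> 2" using Z(2) by simp
        have fOb: "finite ?Ob" using finZ' finD by simp
        have NN: "u \<in> N" "v \<in> N" using uv unfolding N_def by blast+
        have "\<exists>p. is_path V' E p u v \<and> supp p \<inter> ?Ob = {}" using pe by blast
        from FcH[OF NN fOb cOb this] obtain p' where p': "is_path V' E p' u v" "supp p' \<inter> ?Ob = {}" "set p' \<inter> H = {}"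
          by blast
        have "is_path (V' - Z') (Ed E D) p' u v" using supp_to[OF p'(1,2)] .
        hence "pth (V' - Z') (Ed E D) p'" "hd p' = u" "last p' = v" unfolding is_path_pth by auto
        moreover have "set p' \<inter> Z = {}" using p'(3) \<open>pth (V' - Z') (Ed E D) p'\<close> unfolding Z'_def pth_def by blast
        ultimately have "pth (V - S - Z) (Ed E D) p'" unfolding pth_def V'_def by blast
        hence "conn (V - S - Z) (Ed E D) (hd p') (last p')" by (rule conn_pth)
        hence cuv: "conn (V - S - Z) (Ed E D) u v" using \<open>hd p' = u\<close> \<open>last p' = v\<close> by simp
        have "conn (V - S - Z) (Ed E D) x y"
          using conn_trans[OF conn_trans[OF uv(3) cuv] uv(4)] by simp
        thus False using nc by blast
      qed
      show "\<exists>p1 p2 p3. is_path (V - S) E p1 x y \<and> is_path (V - S) E p2 x y \<and> is_path (V - S) E p3 x y \<and>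
            p1 \<noteq> p2 \<and> p1 \<noteq> p3 \<and> p2 \<noteq> p3 \<and>
            interior p1 \<inter> interior p2 = {} \<and> interior p1 \<inter> interior p3 = {} \<and> interior p2 \<inter> interior p3 = {}"
      proof (rule three_linked[OF sym irr xV xy])
        assume nE: "\<not> E x y"
        show "\<forall>Z. finite Z \<and> card Z \<le> 2 \<and> x \<notin> Z \<and> y \<notin> Z \<longrightarrow> conn (V - S - Z) E x y"
        proof (intro allI impI)
          fix Z assume Z: "finite Z \<and> card Z \<le> 2 \<and> x \<notin> Z \<and> y \<notin> Z"
          have "conn (V - Z) E x y" using S1a[OF assms(3)] Z xV by blast
          hence "conn (V - Z) (Ed E {}) x y" by (simp add: Ed_empty)
          hence "conn (V - S - Z) (Ed E {}) x y" using MC[of "{}" Z] Z by simp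
          thus "conn (V - S - Z) E x y" by (simp add: Ed_empty)
        qed
      next
        assume e: "E x y"
        show "\<forall>Z. finite Z \<and> card Z \<le> 1 \<and> x \<notin> Z \<and> y \<notin> Z \<longrightarrow> conn (V - S - Z) (rem E x y) x y"
        proof (intro allI impI)
          fix Z assume Z: "finite Z \<and> card Z \<le> 1 \<and> x \<notin> Z \<and> y \<notin> Z"
          have "conn (V - Z) (rem E x y) x y" using S1b[OF assms(1,2,3) e] Z by blast
          hence "conn (V - Z) (Ed E {{x, y}}) x y" by (simp add: Ed_rem)
          hence "conn (V - S - Z) (Ed E {{x, y}}) x y" using MC[of "{{x, y}}" Z] Z by simp
          thus "conn (V - S - Z) (rem E x y) x y" by (simp add: Ed_rem)
        qed
      qed
    qed
  qed
qed


end
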